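(* Let $s,u\geq 0$ and $m,v,w>0$. Let $\mathfrak{n}$ be the five-dimensional real Lie algebra with basis $\{E_1,\dots,E_5\}$ whose only non-vanishing brackets (up to antisymmetry) are $$[E_1,E_2]=mE_4+sE_5,\qquad [E_1,E_3]=uE_5,\qquad [E_1,E_4]=vE_5,\qquad [E_2,E_3]=wE_5.$$ Equip the corresponding simply connected nilpotent Lie group with the left-invariant Riemannian metric for which $\{E_1,\dots,E_5\}$ is orthonormal. Then this metric is an algebraic Ricci soliton if and only if $$s=u=0,\qquad v=m,\qquad w=\tfrac{\sqrt2}{2}m.$$ In that case $$c=-\tfrac74m^2,\qquad D=\mathrm{diag}\big(\tfrac34m^2,m^2,\tfrac32m^2,\tfrac74m^2,\tfrac52m^2\big),$$ where $D$ is written as a matrix with respect to the basis $\{E_1,\dots,E_5\}$.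
   Context: Let $G$ be a Lie group with Lie algebra $\mathfrak{g}$ and let $g$ be a left-invariant Riemannian metric on $G$. Let $\mathrm{Ric}$ denote the $(1,1)$ Ricci tensor of $g$, viewed as a linear endomorphism of $\mathfrak{g}$. The metric $g$ is an algebraic Ricci soliton if there are a real number $c$ and a derivation $D$ of $\mathfrak{g}$ such that $\mathrm{Ric}=c\,\mathrm{Id}+D$. The notation $\mathrm{diag}(a_1,\dots,a_5)$ denotes the diagonal matrix with these entries. *)

theory Defs
  imports Complex_Main
begin

text \<open>A Lie algebra of dimension n with an orthonormal basis e_0,...,e_(n-1) of a
left-invariant metric is encoded by its structure constants
C i j k = <[e_i,e_j], e_k>.  All tensors below are components w.r.t. this basis.\<close>

text \<open>Levi-Civita connection (Koszul formula for left-invariant fields):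
G i j k = <nabla_(e_i) e_j, e_k>.\<close>
definition lc_conn :: "(nat \<Rightarrow> nat \<Rightarrow> nat \<Rightarrow> real) \<Rightarrow> nat \<Rightarrow> nat \<Rightarrow> nat \<Rightarrow> real" where
  "lc_conn C i j k = (C i j k - C j k i + C k i j) / 2"

text \<open>Riemann curvature R(X,Y)Z = nabla_X nabla_Y Z - nabla_Y nabla_X Z - nabla_[X,Y] Z;
curv n C i j k l = <R(e_i,e_j) e_k, e_l>.\<close>
definition curv :: "nat \<Rightarrow> (nat \<Rightarrow> nat \<Rightarrow> nat \<Rightarrow> real) \<Rightarrow> nat \<Rightarrow> nat \<Rightarrow> nat \<Rightarrow> nat \<Rightarrow> real" where
  "curv n C i j k l =
     (\<Sum>p<n. lc_conn C j k p * lc_conn C i p l - lc_conn C i k p * lc_conn C j p l)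
     - (\<Sum>p<n. C i j p * lc_conn C p k l)"

text \<open>Ricci tensor Ric(Y,Z) = trace (X \<mapsto> R(X,Y)Z); as a (1,1)-tensor its matrix w.r.t. the
orthonormal basis has entry (k,j) = Ric(e_j,e_k), i.e. Ric e_j = sum_k ricci_mat n C k j e_k.\<close>
definition ricci_mat :: "nat \<Rightarrow> (nat \<Rightarrow> nat \<Rightarrow> nat \<Rightarrow> real) \<Rightarrow> nat \<Rightarrow> nat \<Rightarrow> real" where
  "ricci_mat n C k j = (\<Sum>i<n. curv n C i j k i)"

text \<open>A linear map D with matrix d (D e_j = sum_i d i j e_i) is a derivation:
D[e_i,e_j] = [D e_i, e_j] + [e_i, D e_j] for all basis vectors.\<close>
definition is_derivation :: "nat \<Rightarrow> (nat \<Rightarrow> nat \<Rightarrow> nat \<Rightarrow> real) \<Rightarrow> (nat \<Rightarrow> nat \<Rightarrow> real) \<Rightarrow> bool" where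
  "is_derivation n C d \<longleftrightarrow>
     (\<forall>i<n. \<forall>j<n. \<forall>k<n.
        (\<Sum>p<n. C i j p * d k p) = (\<Sum>p<n. d p i * C p j k) + (\<Sum>p<n. d p j * C i p k))"

definition soliton_data :: "nat \<Rightarrow> (nat \<Rightarrow> nat \<Rightarrow> nat \<Rightarrow> real) \<Rightarrow> real \<Rightarrow> (nat \<Rightarrow> nat \<Rightarrow> real) \<Rightarrow> bool" where
  "soliton_data n C c d \<longleftrightarrow> is_derivation n C d \<and>
     (\<forall>i<n. \<forall>j<n. ricci_mat n C i j = c * (if i = j then 1 else 0) + d i j)"

definition algebraic_ricci_soliton :: "nat \<Rightarrow> (nat \<Rightarrow> nat \<Rightarrow> nat \<Rightarrow> real) \<Rightarrow> bool" where
  "algebraic_ricci_soliton n C \<longleftrightarrow> (\<exists>c d. soliton_data n C c d)"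

text \<open>The five-dimensional nilpotent Lie algebra; index p (0..4) stands for E_(p+1).
Brackets: [E1,E2]=m E4 + s E5, [E1,E3]=u E5, [E1,E4]=v E5, [E2,E3]=w E5.\<close>
definition nbr0 :: "real \<Rightarrow> real \<Rightarrow> real \<Rightarrow> real \<Rightarrow> real \<Rightarrow> nat \<Rightarrow> nat \<Rightarrow> nat \<Rightarrow> real" where
  "nbr0 m s u v w i j k =
     (if (i,j,k) = (0,1,3) then m
      else if (i,j,k) = (0,1,4) then s
      else if (i,j,k) = (0,2,4) then u
      else if (i,j,k) = (0,3,4) then v
      else if (i,j,k) = (1,2,4) then w
      else 0)"

definition nstruct :: "real \<Rightarrow> real \<Rightarrow> real \<Rightarrow> real \<Rightarrow> real \<Rightarrow> nat \<Rightarrow> nat \<Rightarrow> nat \<Rightarrow> real" where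
  "nstruct m s u v w i j k = nbr0 m s u v w i j k - nbr0 m s u v w j i k"

end

theory Submission imports Defs begin
lemma s5: "(\<Sum>p<5::nat. f p) = f 0 + f 1 + f 2 + f 3 + (f 4::real)"
  by (simp add: numeral_eq_Suc)
lemma less5: "(i::nat)<5 \<longleftrightarrow> i=0 \<or> i=1 \<or> i=2 \<or> i=3 \<or> i=4" by auto

definition Rf :: "real \<Rightarrow> real \<Rightarrow> real \<Rightarrow> real \<Rightarrow> real \<Rightarrow> nat \<Rightarrow> nat \<Rightarrow> real" where
 "Rf m s u v w i j =
   (if (i,j) = (0,0) then -(m^2+s^2+u^2+v^2)/2
    else if (i,j) = (1,1) then -(m^2+s^2+w^2)/2
    else if (i,j) = (2,2) then -(u^2+w^2)/2
    else if (i,j) = (3,3) then (m^2-v^2)/2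
    else if (i,j) = (4,4) then (s^2+u^2+v^2+w^2)/2
    else if (i,j) = (0,1) \<or> (i,j) = (1,0) then -u*w/2
    else if (i,j) = (0,2) \<or> (i,j) = (2,0) then s*w/2
    else if (i,j) = (1,2) \<or> (i,j) = (2,1) then -s*u/2
    else if (i,j) = (1,3) \<or> (i,j) = (3,1) then -s*v/2
    else if (i,j) = (2,3) \<or> (i,j) = (3,2) then -u*v/2
    else if (i,j) = (3,4) \<or> (i,j) = (4,3) then m*s/2
    else 0)"

lemma ric: "i<5 \<Longrightarrow> j<5 \<Longrightarrow> ricci_mat 5 (nstruct m s u v w) i j = Rf m s u v w i j"
  unfolding less5
  by (elim disjE; simp add: ricci_mat_def curv_def s5 lc_conn_def nstruct_def nbr0_def Rf_def;
      simp add: field_simps power2_eq_square)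
lemma all5: "(\<forall>i<(5::nat). P i) \<longleftrightarrow> P 0 \<and> P 1 \<and> P 2 \<and> P 3 \<and> P 4"
  unfolding less5 by auto

lemma deriv_ok: "is_derivation 5 (nstruct m 0 0 m w) (\<lambda>i j::nat. if i = j then [3/4 * m^2, m^2, 3/2 * m^2, 7/4 * m^2, 5/2 * m^2] ! i else (0::real))"
  unfolding is_derivation_def less5
  apply (intro allI impI)
  apply (elim disjE)
  apply (simp_all add: s5 nstruct_def nbr0_def)
  done

lemma ric_ok:
  assumes "w^2 = m^2/2"
  shows "\<forall>i<5. \<forall>j<5. ricci_mat 5 (nstruct m 0 0 m w) i j = (- 7 / 4 * m ^ 2) * (if i = j then 1 else 0) + (if i = j then [3/4 * m^2, m^2, 3/2 * m^2, 7/4 * m^2, 5/2 * m^2] ! i else (0::real))"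
  unfolding less5
  apply (intro allI impI)
  apply (elim disjE)
  apply (simp_all add: ric Rf_def assms)
  done

lemma core:
  fixes m s u v w :: real
  assumes "m > 0" "v > 0" "w > 0"
    and sd: "soliton_data 5 (nstruct m s u v w) c d"
  shows "s = 0 \<and> u = 0 \<and> v = m \<and> w = sqrt 2 / 2 * m \<and> c = - 7 / 4 * m ^ 2"
proof -
  let ?C = "nstruct m s u v w"
  have der: "is_derivation 5 ?C d" and rq: "\<forall>i<5. \<forall>j<5. ricci_mat 5 ?C i j = c * (if i = j then 1 else 0) + d i j"
    using sd unfolding soliton_data_def by auto
  have dd: "d i j = Rf m s u v w i j - c * (if i = j then 1 else 0)" if "i<5" "j<5" for i j
    using rq that ric[OF that, of m s u v w] by force
  have e: "(\<Sum>p<5. ?C i j p * d k p) = (\<Sum>p<5. d p i * ?C p j k) + (\<Sum>p<5. d p j * ?C i p k)"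
    if "i<5" "j<5" "k<5" for i j k
    using der that unfolding is_derivation_def by blast
  have e012: "m * d 1 3 + s * d 1 4 = 0"
    using e[of 0 1 1] by (simp add: s5 nstruct_def nbr0_def)
  have e013: "m * d 2 3 + s * d 2 4 = 0"
    using e[of 0 1 2] by (simp add: s5 nstruct_def nbr0_def)
  have "m * (- s * v / 2) + s * 0 = 0" using e012 dd[of 1 3] dd[of 1 4] by (simp add: Rf_def)
  hence s0: "s = 0" using assms by simp
  have "m * (- u * v / 2) + s * 0 = 0" using e013 dd[of 2 3] dd[of 2 4] by (simp add: Rf_def)
  hence u0: "u = 0" using assms by simp
  have eA: "m * d 3 3 + s * d 3 4 = m * d 0 0 + m * d 1 1"
    using e[of 0 1 3] by (simp add: s5 nstruct_def nbr0_def algebra_simps)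
  have eB: "v * d 4 4 = v * d 0 0 + s * d 1 3 + u * d 2 3 + v * d 3 3"
    using e[of 0 3 4] by (simp add: s5 nstruct_def nbr0_def algebra_simps)
  have eC: "s * d 0 2 + w * d 4 4 = u * d 0 1 + (w * d 1 1 + w * d 2 2)"
    using e[of 1 2 4] by (simp add: s5 nstruct_def nbr0_def algebra_simps)
  have "m * (d 3 3 - (d 0 0 + d 1 1)) = 0" using eA s0 by (simp add: algebra_simps)
  hence A: "d 3 3 = d 0 0 + d 1 1" using assms by simp
  have "v * (d 4 4 - (d 0 0 + d 3 3)) = 0" using eB s0 u0 by (simp add: algebra_simps)
  hence B: "d 4 4 = d 0 0 + d 3 3" using assms by simp
  have "w * (d 4 4 - (d 1 1 + d 2 2)) = 0" using eC s0 u0 by (simp add: algebra_simps)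
  hence Cc: "d 4 4 = d 1 1 + d 2 2" using assms by simp
  have d00: "d 0 0 = -(m^2+v^2)/2 - c" using dd[of 0 0] s0 u0 by (simp add: Rf_def)
  have d11: "d 1 1 = -(m^2+w^2)/2 - c" using dd[of 1 1] s0 u0 by (simp add: Rf_def)
  have d22: "d 2 2 = -(w^2)/2 - c" using dd[of 2 2] s0 u0 by (simp add: Rf_def)
  have d33: "d 3 3 = (m^2-v^2)/2 - c" using dd[of 3 3] s0 u0 by (simp add: Rf_def)
  have d44: "d 4 4 = (v^2+w^2)/2 - c" using dd[of 4 4] s0 u0 by (simp add: Rf_def)
  have A': "(m^2-v^2)/2 - c = -(m^2+v^2)/2 - c + (-(m^2+w^2)/2 - c)"
    using A d00 d11 d33 by linarith
  have B': "(v^2+w^2)/2 - c = -(m^2+v^2)/2 - c + ((m^2-v^2)/2 - c)"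
    using B d00 d33 d44 by linarith
  have C': "(v^2+w^2)/2 - c = -(m^2+w^2)/2 - c + (-(w^2)/2 - c)"
    using Cc d11 d22 d44 by linarith
  have vm2: "v^2 = m^2" using A' B' by (simp add: field_simps; linarith)
  hence vm: "v = m" using assms by (simp add: power2_eq_iff_nonneg)
  have w2: "m^2 = 2 * w^2" using A' C' vm by (simp add: field_simps; linarith)
  have q2: "(sqrt 2 / 2 * m)^2 = m^2/2" by (simp add: power_mult_distrib power_divide)
  have "(sqrt 2 / 2 * m)^2 = w^2" using w2 q2 by simp
  hence ww: "w = sqrt 2 / 2 * m" using assms by (simp add: power2_eq_iff_nonneg)
  have cc: "c = - 7 / 4 * m ^ 2" using A' vm w2 by (simp add: field_simps; linarith)
  show ?thesis using s0 u0 vm ww cc by simp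
qed

theorem mainTheorem8:
  fixes m s u v w :: real
  assumes "s \<ge> 0" "u \<ge> 0" "m > 0" "v > 0" "w > 0"
  shows "(algebraic_ricci_soliton 5 (nstruct m s u v w) \<longleftrightarrow>
            s = 0 \<and> u = 0 \<and> v = m \<and> w = sqrt 2 / 2 * m)
       \<and> (\<forall>c d. soliton_data 5 (nstruct m s u v w) c d \<longrightarrow>
            c = - 7 / 4 * m ^ 2 \<and>
            (\<forall>i<5. \<forall>j<5. d i j =
               (if i = j then [3/4 * m^2, m^2, 3/2 * m^2, 7/4 * m^2, 5/2 * m^2] ! i else 0)))"
proof -
  let ?C = "nstruct m s u v w"
  have second: "c = - 7 / 4 * m ^ 2 \<and>
            (\<forall>i<5. \<forall>j<5. d i j =
               (if i = j then [3/4 * m^2, m^2, 3/2 * m^2, 7/4 * m^2, 5/2 * m^2] ! i else 0))"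
    if sd: "soliton_data 5 ?C c d" for c d
  proof -
    have k: "s = 0 \<and> u = 0 \<and> v = m \<and> w = sqrt 2 / 2 * m \<and> c = - 7 / 4 * m ^ 2"
      using core[OF assms(3-5) sd] .
    have w2: "w^2 = m^2/2" proof -
      have kw: "w = sqrt 2/2*m" using k by blast
      have q: "(sqrt 2/2*m)^2 = m^2/2" by (simp add: power_mult_distrib power_divide)
      show ?thesis unfolding kw by (rule q)
    qed
    have rq: "\<forall>i<5. \<forall>j<5. ricci_mat 5 ?C i j = c * (if i = j then 1 else 0) + d i j"
      using sd unfolding soliton_data_def by auto
    have "d i j = (if i = j then [3/4 * m^2, m^2, 3/2 * m^2, 7/4 * m^2, 5/2 * m^2] ! i else 0)"
      if "i<5" "j<5" for i j
    proof -
      have "d i j = Rf m s u v w i j - c * (if i = j then 1 else 0)"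
        using rq that ric[OF that, of m s u v w] by force
      thus ?thesis using that k w2 unfolding less5
        by (elim disjE; simp add: Rf_def; simp add: algebra_simps)
    qed
    thus ?thesis using k by blast
  qed
  have conv: "algebraic_ricci_soliton 5 ?C" if h: "s = 0 \<and> u = 0 \<and> v = m \<and> w = sqrt 2 / 2 * m"
  proof -
    define c where "c = - 7 / 4 * m ^ 2"
    define d where "d = (\<lambda>i j::nat. if i = j then [3/4 * m^2, m^2, 3/2 * m^2, 7/4 * m^2, 5/2 * m^2] ! i else (0::real))"
    have w2: "w^2 = m^2/2" proof -
      have kw: "w = sqrt 2/2*m" using h by blast
      have q: "(sqrt 2/2*m)^2 = m^2/2" by (simp add: power_mult_distrib power_divide)
      show ?thesis unfolding kw by (rule q)
    qed
    have "is_derivation 5 ?C d" using h deriv_ok unfolding d_def by simp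
    moreover have "\<forall>i<5. \<forall>j<5. ricci_mat 5 ?C i j = c * (if i = j then 1 else 0) + d i j"
      using h ric_ok[OF w2] unfolding d_def c_def by simp
    ultimately show ?thesis unfolding algebraic_ricci_soliton_def soliton_data_def by blast
  qed
  have fwd: "s = 0 \<and> u = 0 \<and> v = m \<and> w = sqrt 2 / 2 * m" if "algebraic_ricci_soliton 5 ?C"
    using that core[OF assms(3-5)] unfolding algebraic_ricci_soliton_def by blast
  show ?thesis using second conv fwd by blast
qed

end
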